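(* Assume (A1) and (A2), and let $\bar Z\in\mathcal{Z}_\star$. The map $T:=\mathrm{Id}+\delta'(\bar Z;\cdot):\mathbb{S}^n\to\mathbb{S}^n$ is firmly nonexpansive, i.e. $$\|T(H)-T(G)\|_F^2+\|(\mathrm{Id}-T)(H)-(\mathrm{Id}-T)(G)\|_F^2\le\|H-G\|_F^2\quad\text{for all }H,G\in\mathbb{S}^n.$$ Moreover, for any $H^{(0)}\in\mathbb{S}^n$, the sequence $H^{(k+1)}:=T(H^{(k)})$ converges to a fixed point of $T$.
   Context: Notation: $\mathbb{S}^n$ is the space of real symmetric $n\times n$ matrices with $\langle A,B\rangle=\mathrm{tr}(AB)$ and Frobenius norm $\|\cdot\|_F$. $\Pi_+$, $\Pi_-$ are the orthogonal projections onto the PSD and NSD cones, and $F'(Z;H):=\lim_{t\downarrow0}(F(Z+tH)-F(Z))/t$ for $F\in\{\Pi_+,\Pi_-\}$. SDP data $C,A_1,\dots,A_m\in\mathbb{S}^n$, $b\in\mathbb{R}^m$ define $\mathcal{A}X:=(\langle A_i,X\rangle)_i$ and $\mathcal{A}^*y:=\sum_iy_iA_i$. A KKT point is $(X,y,S)$ with $\mathcal{A}X=b$, $\mathcal{A}^*y+S=C$, $X,S\succeq0$, $\langle X,S\rangle=0$. $\mathcal{X}_\star$, $\mathcal{S}_\star$ are the sets of $X$, resp. $S$, in KKT points. (A1) $\mathcal{A}$ is surjective. (A2) Some KKT point $(X_{sc},y_{sc},S_{sc})$ has $\mathrm{rank}X_{sc}+\mathrm{rank}S_{sc}=n$. Let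 $\mathcal{P}:=\mathcal{A}^*(\mathcal{A}\mathcal{A}^* )^{-1}\mathcal{A}$ and $\mathcal{P}^\perp:=\mathrm{Id}-\mathcal{P}$. Fix $\sigma>0$ and let $\mathcal{Z}_\star:=\{X-\sigma S:X\in\mathcal{X}_\star,S\in\mathcal{S}_\star\}$. For $\bar Z\in\mathcal{Z}_\star$, $\delta'(\bar Z;H):=-\mathcal{P}\Pi_+'(\bar Z;H)-\mathcal{P}^\perp\Pi_-'(\bar Z;H)$. *)

theory Defs
  imports "HOL-Analysis.Analysis"
begin

text \<open>Real n x n matrices are "real^'n^'n"; the Euclidean inner product / norm on this
type is the trace inner product / Frobenius norm on symmetric matrices.\<close>

type_synonym 'n mat = "real^'n^'n"

definition sym_mat :: "'n::finite mat \<Rightarrow> bool" where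
  "sym_mat A \<longleftrightarrow> transpose A = A"

definition Sn :: "'n::finite mat set" where
  "Sn = {A. sym_mat A}"

definition psd :: "'n::finite mat \<Rightarrow> bool" where
  "psd A \<longleftrightarrow> sym_mat A \<and> (\<forall>x. 0 \<le> x \<bullet> (A *v x))"

definition nsd :: "'n::finite mat \<Rightarrow> bool" where
  "nsd A \<longleftrightarrow> psd (- A)"

definition proj_onto :: "'n::finite mat set \<Rightarrow> 'n mat \<Rightarrow> 'n mat" where
  "proj_onto K X = (THE Y. Y \<in> K \<and> (\<forall>W\<in>K. dist X Y \<le> dist X W))"

definition proj_psd :: "'n::finite mat \<Rightarrow> 'n mat" where
  "proj_psd = proj_onto {A. psd A}"

definition proj_nsd :: "'n::finite mat \<Rightarrow> 'n mat" where
  "proj_nsd = proj_onto {A. nsd A}"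

definition dir_deriv :: "('n::finite mat \<Rightarrow> 'n mat) \<Rightarrow> 'n mat \<Rightarrow> 'n mat \<Rightarrow> 'n mat" where
  "dir_deriv F Z H = Lim (at_right (0::real)) (\<lambda>t. (F (Z + t *\<^sub>R H) - F Z) /\<^sub>R t)"

text \<open>SDP operators. Constraint matrices indexed by a finite type 'm (so m = CARD('m)).\<close>
definition Aop :: "('m::finite \<Rightarrow> 'n::finite mat) \<Rightarrow> 'n mat \<Rightarrow> real^'m" where
  "Aop A X = (\<chi> i. A i \<bullet> X)"

definition Aadj :: "('m::finite \<Rightarrow> 'n::finite mat) \<Rightarrow> real^'m \<Rightarrow> 'n mat" where
  "Aadj A y = (\<Sum>i\<in>UNIV. (y $ i) *\<^sub>R A i)"

definition is_KKT ::
  "'n::finite mat \<Rightarrow> ('m::finite \<Rightarrow> 'n mat) \<Rightarrow> real^'m \<Rightarrow> 'n mat \<Rightarrow> real^'m \<Rightarrow> 'n mat \<Rightarrow> bool" where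
  "is_KKT C A b X y S \<longleftrightarrow> Aop A X = b \<and> Aadj A y + S = C \<and> psd X \<and> psd S \<and> X \<bullet> S = 0"

definition X_star :: "'n::finite mat \<Rightarrow> ('m::finite \<Rightarrow> 'n mat) \<Rightarrow> real^'m \<Rightarrow> 'n mat set" where
  "X_star C A b = {X. \<exists>y S. is_KKT C A b X y S}"

definition S_star :: "'n::finite mat \<Rightarrow> ('m::finite \<Rightarrow> 'n mat) \<Rightarrow> real^'m \<Rightarrow> 'n mat set" where
  "S_star C A b = {S. \<exists>X y. is_KKT C A b X y S}"

definition Z_star :: "real \<Rightarrow> 'n::finite mat \<Rightarrow> ('m::finite \<Rightarrow> 'n mat) \<Rightarrow> real^'m \<Rightarrow> 'n mat set" where
  "Z_star \<sigma> C A b = {X - \<sigma> *\<^sub>R S | X S. X \<in> X_star C A b \<and> S \<in> S_star C A b}"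

text \<open>P = A^*(AA^*)^{-1}A; the matrix of AA^* is the Gram matrix of the A_i.\<close>
definition Pop :: "('m::finite \<Rightarrow> 'n::finite mat) \<Rightarrow> 'n mat \<Rightarrow> 'n mat" where
  "Pop A X = Aadj A (matrix_inv (\<chi> i j. A i \<bullet> A j) *v Aop A X)"

definition Pperp :: "('m::finite \<Rightarrow> 'n::finite mat) \<Rightarrow> 'n mat \<Rightarrow> 'n mat" where
  "Pperp A X = X - Pop A X"

definition delta' :: "('m::finite \<Rightarrow> 'n::finite mat) \<Rightarrow> 'n mat \<Rightarrow> 'n mat \<Rightarrow> 'n mat" where
  "delta' A Z H = - Pop A (dir_deriv proj_psd Z H) - Pperp A (dir_deriv proj_nsd Z H)"

end

theory Submission
  imports Defs
begin

definition outer :: "real^'n::finite \<Rightarrow> real^'n \<Rightarrow> real^'n^'n" where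
  "outer u w = (\<chi> i j. u$i * w$j)"

lemma sym_entry: "sym_mat A \<Longrightarrow> A$i$j = A$j$i"
  unfolding sym_mat_def by (metis transpose_def vec_lambda_beta)

lemma sym_matI: "(\<And>i j. A$i$j = A$j$i) \<Longrightarrow> sym_mat A"
  unfolding sym_mat_def transpose_def by (simp add: vec_eq_iff)

lemma psd_sym: "psd A \<Longrightarrow> sym_mat A" by (simp add: psd_def)
lemma psd_quad: "psd A \<Longrightarrow> 0 \<le> x \<bullet> (A *v x)" by (simp add: psd_def)

lemma sym_inner_mv: "sym_mat A \<Longrightarrow> x \<bullet> (A *v y) = (A *v x) \<bullet> y"
  by (metis dot_lmul_matrix sym_mat_def transpose_matrix_vector)

lemma sym_vm: "sym_mat A \<Longrightarrow> x v* A = A *v x"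
  by (metis sym_mat_def transpose_matrix_vector)

lemma psd_quad_zero:
  assumes "psd A" "x \<bullet> (A *v x) = 0"
  shows "A *v x = 0"
proof -
  define w where "w = A *v x"
  define n where "n = w \<bullet> w"
  define c where "c = w \<bullet> (A *v w)"
  have c0: "c \<ge> 0" using assms(1) psd_quad c_def by blast
  have xw: "x \<bullet> (A *v w) = n"
    using sym_inner_mv[OF psd_sym[OF assms(1)]] n_def w_def by simp
  have wx: "w \<bullet> (A *v x) = n" using n_def w_def by simp
  define s where "s = n / (c + 1)"
  have "0 \<le> (x - s *\<^sub>R w) \<bullet> (A *v (x - s *\<^sub>R w))" using assms(1) psd_quad by blast
  also have "\<dots> = x \<bullet> (A *v x) - s * (x \<bullet> (A *v w)) - s * (w \<bullet> (A *v x)) + s * s * c"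
    by (simp add: algebra_simps inner_diff_left inner_diff_right c_def)
  also have "\<dots> = - 2 * s * n + s * s * c" using assms(2) xw wx by simp
  finally have h: "0 \<le> - 2 * s * n + s * s * c" .
  have "n = 0"
  proof (rule ccontr)
    assume "n \<noteq> 0"
    then have np: "n > 0" using n_def by (simp add: order_less_le)
    have c1: "c + 1 > 0" using c0 by simp
    have sp: "s > 0" using np c1 by (simp add: s_def)
    have "s * c = n * (c / (c + 1))" by (simp add: s_def)
    also have "\<dots> \<le> n * 1" using np c1 c0 by (intro mult_left_mono) auto
    finally have sc: "s * c \<le> n" by simp
    have "s * (s * c) \<le> s * n" using sc sp by (intro mult_left_mono) auto
    then have "- 2 * s * n + s * s * c \<le> - (s * n)" by (simp add: algebra_simps)
    also have "\<dots> < 0" using sp np by simp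
    finally show False using h by simp
  qed
  then show ?thesis using n_def w_def by simp
qed

lemma psd_cs:
  assumes "psd A"
  shows "(x \<bullet> (A *v y))^2 \<le> (x \<bullet> (A *v x)) * (y \<bullet> (A *v y))"
proof (cases "y \<bullet> (A *v y) = 0")
  case True
  then have "A *v y = 0" using psd_quad_zero assms by blast
  then show ?thesis using True by simp
next
  case False
  define d where "d = y \<bullet> (A *v y)"
  define c where "c = x \<bullet> (A *v y)"
  have dp: "d > 0" using False assms psd_quad d_def by (simp add: order_less_le)
  have yx: "y \<bullet> (A *v x) = c"
    using sym_inner_mv[OF psd_sym[OF assms]] c_def by (simp add: inner_commute)
  define s where "s = c / d"
  have "0 \<le> (x - s *\<^sub>R y) \<bullet> (A *v (x - s *\<^sub>R y))" using assms psd_quad by blast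
  also have "\<dots> = x \<bullet> (A *v x) - s * c - s * (y \<bullet> (A *v x)) + s * s * d"
    by (simp add: algebra_simps inner_diff_left inner_diff_right c_def d_def)
  also have "\<dots> = x \<bullet> (A *v x) - c * c / d"
    using yx dp by (simp add: s_def field_simps)
  finally have "c * c \<le> (x \<bullet> (A *v x)) * d" using dp by (simp add: field_simps)
  then show ?thesis by (simp add: c_def d_def power2_eq_square)
qed

lemma mv_axis: "(A *v axis j 1)$i = A$i$j"
  by (simp add: matrix_vector_mult_def axis_def if_distrib cong: if_cong)

lemma axis_quad: "axis j 1 \<bullet> (A *v axis j 1) = A$j$j"
  by (simp add: inner_axis' mv_axis)

lemma psd_diag_zero:
  assumes "psd A" "A$i$i = 0"
  shows "A$k$i = 0"
proof -
  have "A *v axis i 1 = 0" using psd_quad_zero[OF assms(1)] assms(2) axis_quad by metis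
  then show ?thesis using mv_axis by (metis zero_index)
qed

lemma outer_mv: "outer u w *v x = (w \<bullet> x) *\<^sub>R u"
  by (simp add: outer_def matrix_vector_mult_def vec_eq_iff inner_vec_def sum_distrib_left mult_ac)

lemma outer_inner: "outer u u \<bullet> B = u \<bullet> (B *v u)"
  by (simp add: outer_def inner_vec_def matrix_vector_mult_def sum_distrib_left mult_ac)

lemma outer_mult: "B ** outer u w = outer (B *v u) w"
  by (simp add: matrix_matrix_mult_def outer_def matrix_vector_mult_def sum_distrib_right sum_distrib_left vec_eq_iff mult_ac)

lemma outer_scale: "outer (k *\<^sub>R u) (k *\<^sub>R u) = (k * k) *\<^sub>R outer u u"
  by (simp add: outer_def vec_eq_iff mult_ac)

lemma outer_zero [simp]: "outer 0 w = 0"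
  by (simp add: outer_def vec_eq_iff)

lemma psd_factor:
  fixes A :: "real^'n::finite^'n"
  shows "psd A \<Longrightarrow> \<exists>us. A = sum_list (map (\<lambda>u. outer u u) us)"
proof (induction "card {i. A$i$i \<noteq> 0}" arbitrary: A rule: less_induct)
  case less
  show ?case
  proof (cases "\<exists>j. A$j$j \<noteq> 0")
    case False
    then have "A = 0" using psd_diag_zero[OF less.prems] by (simp add: vec_eq_iff)
    then show ?thesis by (intro exI[of _ "[]"]) simp
  next
    case True
    then obtain j where j: "A$j$j \<noteq> 0" by auto
    define d where "d = A$j$j"
    have "0 \<le> A$j$j" using psd_quad[OF less.prems, of "axis j 1"] axis_quad by metis
    then have dp: "d > 0" using j d_def by (simp add: order_less_le)
    define c where "c = A *v axis j 1"
    define A' where "A' = A - (1/d) *\<^sub>R outer c c"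
    have symA: "sym_mat A" using less.prems psd_sym by blast
    have psd': "psd A'"
      unfolding psd_def
    proof
      show "sym_mat A'"
        by (rule sym_matI) (simp add: A'_def outer_def sym_entry[OF symA])
      show "\<forall>x. 0 \<le> x \<bullet> (A' *v x)"
      proof
        fix w
        have cw: "c \<bullet> w = w \<bullet> (A *v axis j 1)"
          using sym_inner_mv[OF symA] c_def by (simp add: inner_commute)
        have "(1 / d) *\<^sub>R outer c c *v w = ((1/d) * (c \<bullet> w)) *\<^sub>R c"
          by (simp add: scaleR_matrix_vector_assoc[symmetric] outer_mv)
        then have e1: "w \<bullet> (A' *v w) = w \<bullet> (A *v w) - (1/d) * (c \<bullet> w)^2"
          by (simp add: A'_def matrix_vector_mult_diff_rdistrib inner_diff_right power2_eq_square inner_commute)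
        have e2: "(c \<bullet> w)^2 \<le> (w \<bullet> (A *v w)) * d"
          using psd_cs[OF less.prems, of w "axis j 1"] cw axis_quad[of j A] d_def by simp
        have "(1/d) * (c \<bullet> w)^2 \<le> (1/d) * ((w \<bullet> (A *v w)) * d)"
          by (rule mult_left_mono) (use e2 dp in auto)
        also have "\<dots> = w \<bullet> (A *v w)" using dp by simp
        finally show "0 \<le> w \<bullet> (A' *v w)" using e1 by linarith
      qed
    qed
    have ent: "A'$i$i = A$i$i - (1/d) * (A$i$j)^2" for i
      by (simp add: A'_def outer_def c_def mv_axis power2_eq_square)
    have sub: "{i. A'$i$i \<noteq> 0} \<subset> {i. A$i$i \<noteq> 0}"
    proof
      show "{i. A'$i$i \<noteq> 0} \<subseteq> {i. A$i$i \<noteq> 0}"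
      proof
        fix i assume "i \<in> {i. A'$i$i \<noteq> 0}"
        then have "A'$i$i \<noteq> 0" by simp
        moreover have "A$i$i = 0 \<Longrightarrow> A'$i$i = 0"
          using ent psd_diag_zero[OF less.prems, of i j] sym_entry[OF symA, of i j] by simp
        ultimately show "i \<in> {i. A$i$i \<noteq> 0}" by auto
      qed
      have "A'$j$j = 0" using ent[of j] dp d_def by (simp add: power2_eq_square)
      then show "{i. A'$i$i \<noteq> 0} \<noteq> {i. A$i$i \<noteq> 0}" using j by auto
    qed
    then have "card {i. A'$i$i \<noteq> 0} < card {i. A$i$i \<noteq> 0}"
      by (simp add: psubset_card_mono)
    from less.hyps[OF this psd'] obtain us where us: "A' = sum_list (map (\<lambda>u. outer u u) us)"
      by blast
    define k where "k = 1 / sqrt d"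
    have kk: "k * k = 1/d" using dp by (simp add: k_def)
    have "A = outer (k *\<^sub>R c) (k *\<^sub>R c) + A'"
      by (simp add: outer_scale kk A'_def)
    then show ?thesis using us by (intro exI[of _ "(k *\<^sub>R c) # us"]) simp
  qed
qed

lemma psd_dual_list:
  assumes "psd B"
  shows "0 \<le> sum_list (map (\<lambda>u. outer u u) us) \<bullet> B \<and>
    (sum_list (map (\<lambda>u. outer u u) us) \<bullet> B = 0 \<longrightarrow> B ** sum_list (map (\<lambda>u. outer u u) us) = 0)"
proof (induction us)
  case Nil
  then show ?case by simp
next
  case (Cons u us)
  let ?S = "sum_list (map (\<lambda>u. outer u u) us)"
  have q: "0 \<le> u \<bullet> (B *v u)" using assms psd_quad by blast
  have e: "sum_list (map (\<lambda>u. outer u u) (u # us)) \<bullet> B = u \<bullet> (B *v u) + ?S \<bullet> B"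
    by (simp add: inner_add_left outer_inner)
  have m: "B ** sum_list (map (\<lambda>u. outer u u) (u # us)) = outer (B *v u) u + B ** ?S"
    by (simp add: matrix_add_ldistrib outer_mult)
  show ?case
  proof
    show "0 \<le> sum_list (map (\<lambda>u. outer u u) (u # us)) \<bullet> B" using e q Cons by simp
    show "sum_list (map (\<lambda>u. outer u u) (u # us)) \<bullet> B = 0 \<longrightarrow> B ** sum_list (map (\<lambda>u. outer u u) (u # us)) = 0"
    proof
      assume "sum_list (map (\<lambda>u. outer u u) (u # us)) \<bullet> B = 0"
      then have "u \<bullet> (B *v u) = 0" "?S \<bullet> B = 0" using e q Cons by linarith+
      then have "B *v u = 0" "B ** ?S = 0" using psd_quad_zero[OF assms] Cons by auto
      then show "B ** sum_list (map (\<lambda>u. outer u u) (u # us)) = 0" using m by simp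
    qed
  qed
qed

lemma psd_inner_nonneg: "psd A \<Longrightarrow> psd B \<Longrightarrow> 0 \<le> A \<bullet> B"
  using psd_factor psd_dual_list by metis

lemma psd_inner_zero: "psd A \<Longrightarrow> psd B \<Longrightarrow> A \<bullet> B = 0 \<Longrightarrow> B ** A = 0"
  using psd_factor psd_dual_list by metis

lemma sym_add: "sym_mat A \<Longrightarrow> sym_mat B \<Longrightarrow> sym_mat (A + B)"
  by (rule sym_matI) (simp add: sym_entry)
lemma sym_diff: "sym_mat A \<Longrightarrow> sym_mat B \<Longrightarrow> sym_mat (A - B)"
  by (rule sym_matI) (simp add: sym_entry)
lemma sym_neg: "sym_mat A \<Longrightarrow> sym_mat (- A)"
  by (rule sym_matI) (simp add: sym_entry)
lemma sym_scale: "sym_mat A \<Longrightarrow> sym_mat (c *\<^sub>R A)"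
  by (rule sym_matI) (simp add: sym_entry)
lemma sym_zero: "sym_mat 0"
  by (rule sym_matI) simp

lemma psd_add: "psd A \<Longrightarrow> psd B \<Longrightarrow> psd (A + B)"
  unfolding psd_def by (simp add: sym_add matrix_vector_mult_add_rdistrib inner_add_right add_nonneg_nonneg)

lemma psd_scale: "0 \<le> c \<Longrightarrow> psd A \<Longrightarrow> psd (c *\<^sub>R A)"
  unfolding psd_def by (simp add: sym_scale scaleR_matrix_vector_assoc[symmetric])

lemma psd_zero: "psd 0"
  unfolding psd_def by (simp add: sym_zero)

lemma sym_outer: "sym_mat (outer u u)"
  by (rule sym_matI) (simp add: outer_def mult.commute)

lemma psd_outer: "psd (outer u u)"
  unfolding psd_def
proof (intro conjI allI)
  fix x
  have "x \<bullet> (outer u u *v x) = (u \<bullet> x)^2" by (simp add: outer_mv power2_eq_square inner_commute)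
  then show "0 \<le> x \<bullet> (outer u u *v x)" by simp
qed (rule sym_outer)

lemma convex_PSD: "convex {A::real^'n::finite^'n. psd A}"
  unfolding convex_def by (auto intro!: psd_add psd_scale)

lemma closed_PSD: "closed {A::real^'n::finite^'n. psd A}"
proof -
  have "{A::real^'n^'n. psd A} = (\<Inter>i. \<Inter>j. {A. A$i$j = A$j$i}) \<inter> (\<Inter>x. {A. 0 \<le> x \<bullet> (A *v x)})"
    by (auto simp: psd_def sym_mat_def vec_eq_iff transpose_def)
  also have "closed \<dots>"
    unfolding matrix_vector_mult_def inner_vec_def
    by (intro closed_Int closed_INT ballI closed_Collect_eq closed_Collect_le continuous_intros)
  finally show ?thesis .
qed

lemma PSD_ne: "{A::real^'n::finite^'n. psd A} \<noteq> {}"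
  using psd_zero by auto

lemma nsd_eq: "{A::real^'n::finite^'n. nsd A} = uminus ` {A. psd A}"
proof (auto simp: nsd_def image_iff)
  fix x :: "real^'n^'n" assume "psd (-x)"
  then show "\<exists>xa. psd xa \<and> x = - xa" by (intro exI[of _ "-x"]) simp
qed

lemma convex_NSD: "convex {A::real^'n::finite^'n. nsd A}"
  unfolding nsd_eq by (rule convex_negations[OF convex_PSD])

lemma closed_NSD: "closed {A::real^'n::finite^'n. nsd A}"
  unfolding nsd_eq by (rule closed_negations[OF closed_PSD])

lemma NSD_ne: "{A::real^'n::finite^'n. nsd A} \<noteq> {}"
proof -
  have "nsd (0::real^'n^'n)" by (simp add: nsd_def psd_zero)
  then show ?thesis by auto
qed

lemma proj_onto_closest:
  assumes "closed S" "convex S" "S \<noteq> {}"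
  shows "proj_onto S Y = closest_point S Y"
  unfolding proj_onto_def
proof (rule the1_equality)
  show "\<exists>!X. X \<in> S \<and> (\<forall>W\<in>S. dist Y X \<le> dist Y W)"
  proof (rule ex_ex1I)
    show "\<exists>X. X \<in> S \<and> (\<forall>W\<in>S. dist Y X \<le> dist Y W)"
      using closest_point_exists[OF assms(1,3)] by blast
    show "\<And>X Xa. X \<in> S \<and> (\<forall>W\<in>S. dist Y X \<le> dist Y W) \<Longrightarrow>
      Xa \<in> S \<and> (\<forall>W\<in>S. dist Y Xa \<le> dist Y W) \<Longrightarrow> X = Xa"
      using any_closest_point_unique[OF assms(2,1)] by blast
  qed
  show "closest_point S Y \<in> S \<and> (\<forall>W\<in>S. dist Y (closest_point S Y) \<le> dist Y W)"
    using closest_point_exists[OF assms(1,3)] by blast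
qed

lemma proj_onto_char:
  fixes Y :: "real^'n::finite^'n"
  assumes "closed S" "convex S" "x \<in> S" "\<forall>y\<in>S. (Y - x) \<bullet> (y - x) \<le> 0"
  shows "proj_onto S Y = x"
proof -
  have "\<forall>z\<in>S. dist Y x \<le> dist Y z"
  proof
    fix z assume z: "z \<in> S"
    have "(Y - x) \<bullet> (Y - x) \<le> (Y - z) \<bullet> (Y - z)"
    proof -
      have "(Y - z) = (Y - x) - (z - x)" by simp
      then have "(Y - z) \<bullet> (Y - z) = (Y - x) \<bullet> (Y - x) - 2 * ((Y - x) \<bullet> (z - x)) + (z - x) \<bullet> (z - x)"
        by (simp add: inner_diff_left inner_diff_right inner_commute)
      then show ?thesis using assms(4) z by (smt (verit) inner_ge_zero)
    qed
    then show "dist Y x \<le> dist Y z" by (simp add: dist_norm norm_le)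
  qed
  then have "x = closest_point S Y" using closest_point_unique[OF assms(2,1,3)] by blast
  then show ?thesis using proj_onto_closest[OF assms(1,2)] assms(3) by auto
qed

lemma proj_psd_closest: "proj_psd Y = closest_point {A. psd A} Y"
  unfolding proj_psd_def by (rule proj_onto_closest[OF closed_PSD convex_PSD PSD_ne])

lemma proj_psd_in: "psd (proj_psd Y)"
  using closest_point_in_set[OF closed_PSD PSD_ne, of Y] unfolding proj_psd_closest by simp

lemma proj_psd_vi: "psd y \<Longrightarrow> (Y - proj_psd Y) \<bullet> (y - proj_psd Y) \<le> 0"
  unfolding proj_psd_closest using closest_point_dot[OF convex_PSD closed_PSD, of y Y] by simp

lemma proj_psd_nonexp: "norm (proj_psd a - proj_psd b) \<le> norm (a - b)"
  using closest_point_lipschitz[OF convex_PSD closed_PSD PSD_ne] proj_psd_closest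
  by (metis dist_norm)

lemma proj_psd_firm: "(norm (proj_psd a - proj_psd b))^2 \<le> (proj_psd a - proj_psd b) \<bullet> (a - b)"
proof -
  have 1: "(a - proj_psd a) \<bullet> (proj_psd b - proj_psd a) \<le> 0" using proj_psd_vi proj_psd_in by blast
  have 2: "(b - proj_psd b) \<bullet> (proj_psd a - proj_psd b) \<le> 0" using proj_psd_vi proj_psd_in by blast
  have "(norm (proj_psd a - proj_psd b))^2 = (proj_psd a - proj_psd b) \<bullet> (proj_psd a - proj_psd b)"
    by (simp add: power2_norm_eq_inner)
  also have "\<dots> = (proj_psd a - proj_psd b) \<bullet> (a - b) + (a - proj_psd a) \<bullet> (proj_psd b - proj_psd a)
     + (b - proj_psd b) \<bullet> (proj_psd a - proj_psd b)"
    by (simp add: inner_diff_left inner_diff_right inner_commute)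
  finally show ?thesis using 1 2 by linarith
qed

lemma mv_neg: "(- A) *v x = - ((A::real^'n::finite^'m) *v x)"
  by (simp add: matrix_vector_mult_def vec_eq_iff sum_negf)

lemma mat_neg_mult: "(- A) ** B = - ((A::real^'n::finite^'n) ** B)"
  by (simp add: matrix_matrix_mult_def vec_eq_iff sum_negf)

lemma proj_sym_props:
  fixes Y :: "real^'n::finite^'n"
  assumes "sym_mat Y"
  defines "x \<equiv> proj_psd Y"
  defines "v \<equiv> Y - proj_psd Y"
  shows "psd x" "psd (- v)" "x \<bullet> v = 0" "v ** x = 0" "x ** v = 0"
proof -
  show px: "psd x" using proj_psd_in x_def by simp
  have sv: "sym_mat v" using assms psd_sym[OF px] by (simp add: v_def x_def sym_diff)
  have vi: "\<And>y. psd y \<Longrightarrow> v \<bullet> (y - x) \<le> 0" using proj_psd_vi x_def v_def by simp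
  show pv: "psd (- v)"
    unfolding psd_def
  proof (intro conjI allI)
    show "sym_mat (- v)" using sv sym_neg by blast
    fix u
    have "v \<bullet> ((x + outer u u) - x) \<le> 0" using vi psd_add[OF px psd_outer] by blast
    then have "outer u u \<bullet> v \<le> 0" by (simp add: inner_commute)
    then show "0 \<le> u \<bullet> (- v *v u)" by (simp add: outer_inner mv_neg)
  qed
  have "v \<bullet> (0 - x) \<le> 0" using vi psd_zero by blast
  moreover have "v \<bullet> ((2::real) *\<^sub>R x - x) \<le> 0" using vi psd_scale[OF _ px, of 2] by simp
  ultimately show xv: "x \<bullet> v = 0" by (simp add: inner_commute inner_diff_right algebra_simps)
  have "(- v) ** x = 0" using psd_inner_zero[OF px pv] xv by simp
  then show vx: "v ** x = 0" by (simp add: mat_neg_mult)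
  have "x ** v = transpose (v ** x)"
    using sv psd_sym[OF px] by (simp add: matrix_transpose_mul sym_mat_def)
  then show "x ** v = 0" using vx by (simp add: transpose_def vec_eq_iff)
qed

lemma proj_nsd_eq:
  fixes Y :: "real^'n::finite^'n"
  assumes "sym_mat Y"
  shows "proj_nsd Y = Y - proj_psd Y"
  unfolding proj_nsd_def
proof (rule proj_onto_char[OF closed_NSD convex_NSD])
  note props = proj_sym_props[OF assms]
  show "Y - proj_psd Y \<in> {A. nsd A}" using props(2) by (simp add: nsd_def)
  show "\<forall>y\<in>{A. nsd A}. (Y - (Y - proj_psd Y)) \<bullet> (y - (Y - proj_psd Y)) \<le> 0"
  proof
    fix y :: "real^'n^'n" assume "y \<in> {A. nsd A}"
    then have "psd (- y)" by (simp add: nsd_def)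
    then have "0 \<le> proj_psd Y \<bullet> (- y)" using psd_inner_nonneg props(1) by blast
    then show "(Y - (Y - proj_psd Y)) \<bullet> (y - (Y - proj_psd Y)) \<le> 0"
      using props(3) by (simp add: inner_diff_right)
  qed
qed

lemma inner_trace: "(A::real^'n::finite^'m::finite) \<bullet> B = trace (transpose A ** B)"
proof -
  have "A \<bullet> B = (\<Sum>i\<in>UNIV. \<Sum>j\<in>UNIV. A$i$j * B$i$j)" by (simp add: inner_vec_def)
  also have "\<dots> = (\<Sum>j\<in>UNIV. \<Sum>i\<in>UNIV. A$i$j * B$i$j)" by (rule sum.swap)
  also have "\<dots> = trace (transpose A ** B)" by (simp add: trace_def matrix_matrix_mult_def transpose_def)
  finally show ?thesis .
qed

lemma mm_row: "(A ** B)$i = (A$i) v* (B::real^'n::finite^'k::finite)"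
  by (simp add: matrix_matrix_mult_def vector_matrix_mult_def vec_eq_iff)

lemma mm_diff_l: "(A::real^'n::finite^'n) ** (B - C) = A ** B - A ** C"
  by (simp add: matrix_matrix_mult_def vec_eq_iff sum_subtractf right_diff_distrib)
lemma mm_diff_r: "((A::real^'n::finite^'n) - B) ** C = A ** C - B ** C"
  by (simp add: matrix_matrix_mult_def vec_eq_iff sum_subtractf left_diff_distrib)
lemma mm_add_r: "((A::real^'n::finite^'n) + B) ** C = A ** C + B ** C"
  by (simp add: matrix_matrix_mult_def vec_eq_iff sum.distrib distrib_right)

lemma trace_transp: "trace (transpose (A::real^'n::finite^'n)) = trace A"
  by (simp add: trace_def transpose_def)

lemma inner_transpose: "transpose A \<bullet> transpose B = (A::real^'n::finite^'n) \<bullet> B"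
proof -
  have "transpose A \<bullet> transpose B = trace (A ** transpose B)" by (simp add: inner_trace)
  also have "\<dots> = trace (transpose (A ** transpose B))" by (simp add: trace_transp)
  also have "\<dots> = trace (B ** transpose A)" by (simp add: matrix_transpose_mul)
  also have "\<dots> = trace (transpose A ** B)" by (rule trace_mul_sym)
  finally show ?thesis by (simp add: inner_trace)
qed

lemma inner_mm_left: "((A::real^'n::finite^'n) ** B) \<bullet> C = B \<bullet> (transpose A ** C)"
  by (simp add: inner_trace matrix_transpose_mul matrix_mul_assoc)

lemma inner_mm_right: "((A::real^'n::finite^'n) ** B) \<bullet> C = A \<bullet> (C ** transpose B)"
proof -
  have "(A ** B) \<bullet> C = trace (transpose B ** (transpose A ** C))"
    by (simp add: inner_trace matrix_transpose_mul matrix_mul_assoc)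
  also have "\<dots> = trace ((transpose A ** C) ** transpose B)" by (rule trace_mul_sym)
  also have "\<dots> = A \<bullet> (C ** transpose B)" by (simp add: inner_trace matrix_mul_assoc)
  finally show ?thesis .
qed

lemma sym_T: "sym_mat A \<Longrightarrow> transpose A = A" by (simp add: sym_mat_def)

lemma mat_eq_rows: "(\<And>i. (A::real^'n::finite^'m::finite)$i = B$i) \<Longrightarrow> A = B"
  by (simp add: vec_eq_iff)

lemma mm_sym_row: "sym_mat B \<Longrightarrow> ((A::real^'n::finite^'n) ** B)$i = B *v (A$i)"
  by (simp add: mm_row sym_vm)

lemma mv_zero_imp: "(\<And>u. A *v u = 0) \<Longrightarrow> (A::real^'n::finite^'n) = 0"
  by (metis matrix_eq matrix_vector_mult_0)

lemma range_of_perp_kernel: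
  fixes N :: "real^'n::finite^'n"
  assumes "sym_mat N" "\<forall>w. N *v w = 0 \<longrightarrow> w \<bullet> z = 0"
  shows "\<exists>s. z = N *v s"
proof -
  let ?f = "\<lambda>x. N *v x"
  have lin: "linear ?f" by simp
  have K0: "?f -` {0} = (range (adjoint ?f))\<^sup>\<bottom>" by (rule ker_orthogonal_comp_adjoint[OF lin])
  have "adjoint ?f = (\<lambda>x. transpose N *v x)" by (rule adjoint_matrix)
  also have "\<dots> = ?f" using sym_T[OF assms(1)] by simp
  finally have K: "?f -` {0} = (range ?f)\<^sup>\<bottom>" using K0 by simp
  have "z \<in> (?f -` {0})\<^sup>\<bottom>" using assms(2) unfolding orthogonal_comp_def orthogonal_def by auto
  then have "z \<in> (range ?f)\<^sup>\<bottom>\<^sup>\<bottom>" using K by simp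
  also have "(range ?f)\<^sup>\<bottom>\<^sup>\<bottom> = range ?f"
  proof (rule orthogonal_comp_self)
    show "subspace (range ?f)"
      unfolding subspace_def
    proof (intro conjI ballI allI)
      show "0 \<in> range ?f" by (metis matrix_vector_mult_0_right rangeI)
      show "a + b \<in> range ?f" if ha: "a \<in> range ?f" and hb: "b \<in> range ?f" for a b
      proof -
        obtain s1 s2 where "a = N *v s1" "b = N *v s2" using ha hb by auto
        then have "a + b = N *v (s1 + s2)" by (simp add: matrix_vector_right_distrib)
        then show ?thesis by blast
      qed
      show "c *\<^sub>R a \<in> range ?f" if ha: "a \<in> range ?f" for c a
      proof -
        obtain s1 where "a = N *v s1" using ha by auto
        then have "c *\<^sub>R a = N *v (c *\<^sub>R s1)" by (simp add: matrix_vector_mult_scaleR)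
        then show ?thesis by blast
      qed
    qed
  qed
  finally show ?thesis by auto
qed

lemma psd_neg_sym: "psd (- v) \<Longrightarrow> sym_mat v"
  using sym_neg[OF psd_sym] by fastforce

lemma decomp_orth:
  fixes x v :: "real^'n::finite^'n"
  assumes px: "psd x" and pv: "psd (- v)" and xv: "x ** v = 0"
    and y: "v *v y = 0" and z: "x *v z = 0"
    and zW: "\<forall>w. x *v w = 0 \<and> v *v w = 0 \<longrightarrow> w \<bullet> z = 0"
  shows "y \<bullet> z = 0"
proof -
  define N where "N = x - v"
  have sv: "sym_mat v" using psd_neg_sym[OF pv] .
  have sx: "sym_mat x" using psd_sym[OF px] .
  have sN: "sym_mat N" using sym_diff[OF sx sv] N_def by simp
  have ker: "x *v w = 0 \<and> v *v w = 0" if "N *v w = 0" for w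
  proof -
    have "w \<bullet> (x *v w) + w \<bullet> ((-v) *v w) = 0"
      using that by (simp add: N_def matrix_vector_mult_diff_rdistrib mv_neg inner_diff_right)
    moreover have "0 \<le> w \<bullet> (x *v w)" "0 \<le> w \<bullet> ((-v) *v w)" using psd_quad px pv by blast+
    ultimately have "w \<bullet> (x *v w) = 0" "w \<bullet> ((-v) *v w) = 0" by linarith+
    then have "x *v w = 0" "(-v) *v w = 0" using psd_quad_zero px pv by blast+
    then show ?thesis by (simp add: mv_neg)
  qed
  obtain s where s: "z = N *v s" using range_of_perp_kernel[OF sN] zW ker by blast
  have "x *v (v *v s) = 0" using xv by (simp add: matrix_vector_mul_assoc)
  then have "x *v (x *v s) = 0" using z s
    by (simp add: N_def matrix_vector_mult_diff_rdistrib matrix_vector_mult_diff_distrib)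
  then have "(x *v s) \<bullet> (x *v s) = 0" using sym_inner_mv[OF sx, of s "x *v s"] by simp
  then have "x *v s = 0" by simp
  then have "z = - (v *v s)" using s by (simp add: N_def matrix_vector_mult_diff_rdistrib)
  then have "y \<bullet> z = - ((v *v y) \<bullet> s)" using sym_inner_mv[OF sv, of y s] by simp
  then show ?thesis using y by simp
qed

lemma sum_mv: "finite B \<Longrightarrow> (sum f B) *v z = (\<Sum>b\<in>B. f b *v (z::real^'n::finite))"
  by (induction B rule: finite_induct) (simp_all add: matrix_vector_mult_add_rdistrib)

lemma proj_matrix_exists:
  fixes W :: "(real^'n::finite) set"
  assumes "subspace W"
  shows "\<exists>P::real^'n^'n. sym_mat P \<and> (\<forall>z. P *v z \<in> W) \<and> (\<forall>w\<in>W. P *v w = w)"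
proof -
  obtain B where B: "B \<subseteq> W" "pairwise orthogonal B" "\<And>x. x \<in> B \<Longrightarrow> norm x = 1"
      "independent B" "span B = W"
    using orthonormal_basis_subspace[OF assms] by metis
  have fin: "finite B" using B(4) independent_imp_finite by blast
  define P where "P = (\<Sum>b\<in>B. outer b b)"
  have Pv: "P *v z = (\<Sum>b\<in>B. (b \<bullet> z) *\<^sub>R b)" for z
    unfolding P_def by (simp add: sum_mv[OF fin] outer_mv)
  have sP: "sym_mat P"
    by (rule sym_matI) (simp add: P_def sum_component outer_def mult.commute)
  have inW: "P *v z \<in> W" for z
    unfolding Pv B(5)[symmetric] by (intro span_sum span_scale span_base)
  have Pfix: "P *v w = w" if w: "w \<in> W" for w
  proof -
    define d where "d = w - P *v w"
    have "d \<in> W" using subspace_diff[OF assms w inW] d_def by simp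
    then have dW: "d \<in> span B" using B(5) by simp
    have "orthogonal d b" if b: "b \<in> B" for b
    proof -
      have "b \<bullet> (P *v w) = (\<Sum>b'\<in>B. (b' \<bullet> w) * (b \<bullet> b'))"
        by (simp add: Pv inner_sum_right)
      also have "\<dots> = (b \<bullet> w) * (b \<bullet> b) + (\<Sum>b'\<in>B - {b}. (b' \<bullet> w) * (b \<bullet> b'))"
        using fin b by (simp add: sum.remove)
      also have "(\<Sum>b'\<in>B - {b}. (b' \<bullet> w) * (b \<bullet> b')) = 0"
        using B(2) b by (intro sum.neutral) (auto simp: pairwise_def orthogonal_def)
      also have "b \<bullet> b = 1" using B(3)[OF b] by (simp add: norm_eq_1)
      finally have "b \<bullet> (P *v w) = b \<bullet> w" by simp
      then show ?thesis by (simp add: d_def orthogonal_def inner_diff_right inner_commute)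
    qed
    then have "orthogonal d d" using orthogonal_to_span[OF dW] by blast
    then have "d = 0" by (simp add: orthogonal_def)
    then show ?thesis by (simp add: d_def)
  qed
  show ?thesis using sP inW Pfix by blast
qed

definition cl_cond :: "real^'n::finite^'n \<Rightarrow> real^'n^'n \<Rightarrow> real^'n^'n \<Rightarrow> real^'n^'n \<Rightarrow> bool" where
 "cl_cond x v H p \<longleftrightarrow> sym_mat p \<and> p ** v + x ** (H - p) = 0 \<and>
   (\<forall>u. x *v u = 0 \<longrightarrow> 0 \<le> u \<bullet> (p *v u)) \<and>
   (\<forall>e. psd e \<longrightarrow> v \<bullet> e = 0 \<longrightarrow> (H - p) \<bullet> e \<le> 0) \<and>
   (\<forall>w. x *v w = 0 \<longrightarrow> v *v w = 0 \<longrightarrow> (p *v w) \<bullet> ((H - p) *v w) = 0)"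

locale pset =
  fixes x v P :: "real^'n::finite^'n"
  assumes px: "psd x" and pv: "psd (- v)" and xv: "x ** v = 0" and vx: "v ** x = 0"
    and sP: "sym_mat P" and Px: "\<And>z. x *v (P *v z) = 0" and Pv: "\<And>z. v *v (P *v z) = 0"
    and Pw: "\<And>w. x *v w = 0 \<Longrightarrow> v *v w = 0 \<Longrightarrow> P *v w = w"
begin

lemma sx: "sym_mat x" using psd_sym[OF px] .
lemma sv: "sym_mat v" using psd_neg_sym[OF pv] .
lemma PP: "P *v (P *v z) = P *v z" using Pw Px Pv by blast
lemma Pin: "(P *v y) \<bullet> z = y \<bullet> (P *v z)" using sym_inner_mv[OF sP] by simp
lemma PP_mat: "P ** P = P"
  by (metis PP matrix_eq matrix_vector_mul_assoc)
lemma vP: "v ** P = 0"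
  by (rule mv_zero_imp) (simp add: matrix_vector_mul_assoc[symmetric] Pv)
lemma xP: "x ** P = 0"
  by (rule mv_zero_imp) (simp add: matrix_vector_mul_assoc[symmetric] Px)

definition cp :: "real^'n^'n \<Rightarrow> real^'n^'n" where "cp M = P ** M ** P"

lemma cp_inner: "cp A \<bullet> B = A \<bullet> cp B"
proof -
  have "cp A \<bullet> B = (P ** A) \<bullet> (B ** transpose P)" unfolding cp_def by (rule inner_mm_right)
  also have "\<dots> = A \<bullet> (transpose P ** (B ** transpose P))" by (rule inner_mm_left)
  also have "\<dots> = A \<bullet> cp B" using sym_T[OF sP] by (simp add: cp_def matrix_mul_assoc)
  finally show ?thesis .
qed

lemma cp_idem: "cp (cp M) = cp M"
proof -
  have "cp (cp M) = (P ** P) ** M ** (P ** P)" by (simp add: cp_def matrix_mul_assoc)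
  then show ?thesis by (simp add: PP_mat cp_def)
qed

lemma cp_diff: "cp (A - B) = cp A - cp B"
  by (simp add: cp_def mm_diff_l mm_diff_r)

lemma cp_v: "cp v = 0"
proof -
  have "cp v = P ** (v ** P)" by (simp add: cp_def matrix_mul_assoc)
  then show ?thesis by (simp add: vP)
qed

lemma cp_sym: "sym_mat M \<Longrightarrow> sym_mat (cp M)"
  unfolding sym_mat_def cp_def using sym_T[OF sP]
  by (simp add: matrix_transpose_mul matrix_mul_assoc)

lemma cp_mv: "cp M *v u = P *v (M *v (P *v u))"
  by (simp add: cp_def matrix_vector_mul_assoc matrix_mul_assoc)

lemma cp_row: "sym_mat M \<Longrightarrow> (cp M)$i = P *v (M *v (P$i))"
  by (simp add: cp_def mm_sym_row[OF sP] mm_sym_row)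

lemma P_row: "P$i = P *v axis i 1"
  by (simp add: vec_eq_iff mv_axis sym_entry[OF sP])

lemma P_row_W: "x *v (P$i) = 0" "v *v (P$i) = 0"
  using Px Pv P_row by metis+

lemma cl_psd:
  assumes "cl_cond x v H p"
  shows "psd (cp p)" "v \<bullet> cp p = 0"
proof -
  have sp: "sym_mat p" and L3: "\<And>u. x *v u = 0 \<Longrightarrow> 0 \<le> u \<bullet> (p *v u)"
    using assms by (auto simp: cl_cond_def)
  show "psd (cp p)"
    unfolding psd_def
  proof (intro conjI allI)
    show "sym_mat (cp p)" using cp_sym[OF sp] .
    fix u
    have "u \<bullet> (cp p *v u) = (P *v u) \<bullet> (p *v (P *v u))" by (simp add: cp_mv Pin)
    then show "0 \<le> u \<bullet> (cp p *v u)" using L3[OF Px] by simp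
  qed
  have "v \<bullet> cp p = cp v \<bullet> p" by (simp add: cp_inner)
  then show "v \<bullet> cp p = 0" by (simp add: cp_v)
qed

lemma cl_comp:
  assumes sH: "sym_mat H" and cl: "cl_cond x v H p"
  shows "cp p \<bullet> cp (H - p) = 0"
proof -
  define r where "r = H - p"
  have sp: "sym_mat p" and L1: "p ** v + x ** r = 0"
    and L5: "\<And>w. x *v w = 0 \<Longrightarrow> v *v w = 0 \<Longrightarrow> (p *v w) \<bullet> (r *v w) = 0"
    using cl by (auto simp: cl_cond_def r_def)
  have sr: "sym_mat r" using sym_diff[OF sH sp] r_def by simp
  have L1v: "p *v (v *v u) + x *v (r *v u) = 0" for u
  proof -
    have "(p ** v + x ** r) *v u = 0" using L1 by simp
    then show ?thesis by (simp add: matrix_vector_mult_add_rdistrib matrix_vector_mul_assoc)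
  qed
  have vy: "v *v (p *v w) = 0" if w: "x *v w = 0" "v *v w = 0" for w
  proof -
    define g where "g = v *v (p *v w)"
    have "g \<bullet> g = (v *v g) \<bullet> (p *v w)" using sym_inner_mv[OF sv, of g "p *v w"] g_def by simp
    also have "\<dots> = (p *v (v *v g)) \<bullet> w" using sym_inner_mv[OF sp, of "v *v g" w] by (simp add: inner_commute)
    also have "\<dots> = - ((x *v (r *v g)) \<bullet> w)" using L1v[of g]
      by (metis add_eq_0_iff2 inner_minus_left)
    also have "\<dots> = - ((r *v g) \<bullet> (x *v w))" using sym_inner_mv[OF sx, of "r *v g" w]
      by (simp add: inner_commute)
    also have "\<dots> = 0" using w by simp
    finally show ?thesis using g_def by simp
  qed
  have xz: "x *v (r *v w) = 0" if w: "v *v w = 0" for w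
    using L1v[of w] w by simp
  have trm: "(cp p)$i \<bullet> (cp r)$i = 0" for i
  proof -
    define w where "w = P$i"
    define y where "y = p *v w"
    define z where "z = r *v w"
    have wW: "x *v w = 0" "v *v w = 0" using P_row_W w_def by auto
    have yz: "y \<bullet> z = 0" using L5[OF wW] y_def z_def by simp
    have split: "(P *v y) \<bullet> (P *v z) = y \<bullet> z - (y - P *v y) \<bullet> (z - P *v z)"
    proof -
      have "(P *v y) \<bullet> (P *v z) = y \<bullet> (P *v z)" by (simp add: Pin PP)
      moreover have "(P *v y) \<bullet> z = y \<bullet> (P *v z)" by (simp add: Pin)
      ultimately show ?thesis by (simp add: inner_diff_left inner_diff_right)
    qed
    have orth: "(y - P *v y) \<bullet> (z - P *v z) = 0"
    proof (rule decomp_orth[OF px pv xv])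
      show "v *v (y - P *v y) = 0" using vy[OF wW] y_def Pv by (simp add: matrix_vector_mult_diff_distrib)
      show "x *v (z - P *v z) = 0" using xz[OF wW(2)] z_def Px by (simp add: matrix_vector_mult_diff_distrib)
      show "\<forall>w'. x *v w' = 0 \<and> v *v w' = 0 \<longrightarrow> w' \<bullet> (z - P *v z) = 0"
      proof (intro allI impI)
        fix w' assume "x *v w' = 0 \<and> v *v w' = 0"
        then have "P *v w' = w'" using Pw by blast
        then have "w' \<bullet> (P *v z) = w' \<bullet> z" using Pin[of w' z] by simp
        then show "w' \<bullet> (z - P *v z) = 0" by (simp add: inner_diff_right)
      qed
    qed
    have "(cp p)$i = P *v y" "(cp r)$i = P *v z" using cp_row sp sr y_def z_def w_def by auto
    then show ?thesis using split orth yz by simp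
  qed
  have "cp p \<bullet> cp r = (\<Sum>i\<in>UNIV. (cp p)$i \<bullet> (cp r)$i)" by (simp add: inner_vec_def)
  also have "\<dots> = 0" using trm by simp
  finally show ?thesis using r_def by simp
qed

lemma cl_unique:
  assumes sH: "sym_mat H" and c1: "cl_cond x v H p" and c2: "cl_cond x v H p'"
  shows "p = p'"
proof -
  have sp: "sym_mat p" and L1: "p ** v + x ** (H - p) = 0"
    and L4: "\<And>e. psd e \<Longrightarrow> v \<bullet> e = 0 \<Longrightarrow> (H - p) \<bullet> e \<le> 0"
    using c1 by (auto simp: cl_cond_def)
  have sp': "sym_mat p'" and L1': "p' ** v + x ** (H - p') = 0"
    and L4': "\<And>e. psd e \<Longrightarrow> v \<bullet> e = 0 \<Longrightarrow> (H - p') \<bullet> e \<le> 0"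
    using c2 by (auto simp: cl_cond_def)
  define d where "d = p - p'"
  have sd: "sym_mat d" using sym_diff[OF sp sp'] d_def by simp
  have U1: "d ** v = x ** d"
  proof -
    have "d ** v - x ** d = (p ** v + x ** (H - p)) - (p' ** v + x ** (H - p'))"
      by (simp add: d_def mm_diff_l mm_diff_r algebra_simps)
    then show ?thesis using L1 L1' by simp
  qed
  have S1: "d \<bullet> (d ** x) = (\<Sum>i\<in>UNIV. d$i \<bullet> (x *v d$i))"
    by (simp add: inner_vec_def[of d "d ** x"] mm_sym_row[OF sx])
  have S2: "d \<bullet> (d ** v) = (\<Sum>i\<in>UNIV. d$i \<bullet> (v *v d$i))"
    by (simp add: inner_vec_def[of d "d ** v"] mm_sym_row[OF sv])
  have T1: "d \<bullet> (x ** d) = d \<bullet> (d ** x)"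
  proof -
    have "d \<bullet> (x ** d) = transpose d \<bullet> transpose (x ** d)" by (simp add: inner_transpose)
    also have "\<dots> = d \<bullet> (d ** x)" using sym_T[OF sd] sym_T[OF sx] by (simp add: matrix_transpose_mul)
    finally show ?thesis .
  qed
  have t1: "0 \<le> d$i \<bullet> (x *v d$i)" for i using psd_quad[OF px] by blast
  have t2: "d$i \<bullet> (v *v d$i) \<le> 0" for i
    using psd_quad[OF pv, of "d$i"] by (simp add: mv_neg)
  have eqS: "(\<Sum>i\<in>UNIV. d$i \<bullet> (x *v d$i)) = (\<Sum>i\<in>UNIV. d$i \<bullet> (v *v d$i))"
    using S1 S2 T1 U1 by simp
  have s1: "0 \<le> (\<Sum>i\<in>UNIV. d$i \<bullet> (x *v d$i))" using t1 by (simp add: sum_nonneg)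
  have s2: "(\<Sum>i\<in>UNIV. d$i \<bullet> (v *v d$i)) \<le> 0" using t2 by (simp add: sum_nonpos)
  have z1: "(\<Sum>i\<in>UNIV. d$i \<bullet> (x *v d$i)) = 0" using eqS s1 s2 by linarith
  have z2: "(\<Sum>i\<in>UNIV. - (d$i \<bullet> (v *v d$i))) = 0" using eqS s1 s2 by (simp add: sum_negf)
  have dx: "x *v d$i = 0" for i
  proof -
    have "d$i \<bullet> (x *v d$i) = 0" using z1 t1 sum_nonneg_eq_0_iff[of UNIV "\<lambda>i. d$i \<bullet> (x *v d$i)"] by auto
    then show ?thesis using psd_quad_zero[OF px] by blast
  qed
  have dv: "v *v d$i = 0" for i
  proof -
    have "- (d$i \<bullet> (v *v d$i)) = 0" using z2 t2 sum_nonneg_eq_0_iff[of UNIV "\<lambda>i. - (d$i \<bullet> (v *v d$i))"] by auto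
    then have "d$i \<bullet> ((- v) *v d$i) = 0" by (simp add: mv_neg)
    then have "(- v) *v d$i = 0" using psd_quad_zero[OF pv] by blast
    then show ?thesis by (simp add: mv_neg)
  qed
  have dP: "d ** P = d"
    by (rule mat_eq_rows) (simp add: mm_sym_row[OF sP] Pw[OF dx dv])
  have Pd: "P ** d = d"
  proof -
    have "transpose (P ** d) = d" using dP sym_T[OF sd] sym_T[OF sP] by (simp add: matrix_transpose_mul)
    then show ?thesis using sym_T[OF sd] by (metis transpose_transpose)
  qed
  have cpd: "cp d = d" using dP Pd by (simp add: cp_def)
  define a where "a = cp p"
  define a' where "a' = cp p'"
  have cpd2: "cp d = a - a'" using cp_diff a_def a'_def d_def by simp
  have dM: "d \<bullet> M = (a - a') \<bullet> cp M" for M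
  proof -
    have "d \<bullet> M = cp d \<bullet> M" using cpd by simp
    also have "\<dots> = d \<bullet> cp M" by (rule cp_inner)
    also have "\<dots> = (a - a') \<bullet> cp M" using cpd cpd2 by simp
    finally show ?thesis .
  qed
  have "d \<bullet> d = d \<bullet> (H - p') - d \<bullet> (H - p)"
    by (simp add: d_def inner_diff_right[symmetric])
  also have "\<dots> = (a - a') \<bullet> cp (H - p') - (a - a') \<bullet> cp (H - p)" by (simp add: dM)
  also have "\<dots> = a \<bullet> cp (H - p') - a' \<bullet> cp (H - p') - a \<bullet> cp (H - p) + a' \<bullet> cp (H - p)"
    by (simp add: inner_diff_left)
  finally have dd: "d \<bullet> d = a \<bullet> cp (H - p') - a' \<bullet> cp (H - p') - a \<bullet> cp (H - p) + a' \<bullet> cp (H - p)" .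
  have c0: "a \<bullet> cp (H - p) = 0" using cl_comp[OF sH c1] a_def by simp
  have c0': "a' \<bullet> cp (H - p') = 0" using cl_comp[OF sH c2] a'_def by simp
  have n1: "a \<bullet> cp (H - p') \<le> 0"
  proof -
    have "a \<bullet> cp (H - p') = cp a \<bullet> (H - p')" by (simp add: cp_inner)
    also have "\<dots> = (H - p') \<bullet> a" using cp_idem a_def by (simp add: inner_commute)
    also have "\<dots> \<le> 0" using L4' cl_psd[OF c1] a_def by simp
    finally show ?thesis .
  qed
  have n2: "a' \<bullet> cp (H - p) \<le> 0"
  proof -
    have "a' \<bullet> cp (H - p) = cp a' \<bullet> (H - p)" by (simp add: cp_inner)
    also have "\<dots> = (H - p) \<bullet> a'" using cp_idem a'_def by (simp add: inner_commute)
    also have "\<dots> \<le> 0" using L4 cl_psd[OF c2] a'_def by simp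
    finally show ?thesis .
  qed
  have "d \<bullet> d \<le> 0" using dd c0 c0' n1 n2 by linarith
  then have "d = 0" by (metis inner_eq_zero_iff inner_ge_zero order_antisym)
  then show ?thesis using d_def by simp
qed

end

lemma unique_cluster_tendsto:
  fixes f :: "real \<Rightarrow> 'a::{heine_borel, real_normed_vector}"
  assumes bnd: "\<And>t. t > 0 \<Longrightarrow> norm (f t) \<le> B"
    and uniq: "\<And>s s' p p'. (\<forall>k. s k > 0) \<Longrightarrow> s \<longlonglongrightarrow> 0 \<Longrightarrow> (\<lambda>k. f (s k)) \<longlonglongrightarrow> p \<Longrightarrow>
        (\<forall>k. s' k > 0) \<Longrightarrow> s' \<longlonglongrightarrow> 0 \<Longrightarrow> (\<lambda>k. f (s' k)) \<longlonglongrightarrow> p' \<Longrightarrow> p = p'"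
  shows "\<exists>L. (f \<longlongrightarrow> L) (at_right 0)"
proof -
  define s0 where "s0 k = inverse (real (Suc k))" for k
  have s0p: "\<forall>k. s0 k > 0" by (simp add: s0_def)
  have s0l: "s0 \<longlonglongrightarrow> 0" unfolding s0_def by (rule LIMSEQ_inverse_real_of_nat)
  have bs: "bounded (range (\<lambda>k. f (s k)))" if "\<forall>k. s k > 0" for s
    unfolding bounded_iff using bnd that by blast
  obtain l r where r: "strict_mono r" and lr: "((\<lambda>k. f (s0 k)) \<circ> r) \<longlonglongrightarrow> l"
    using bounded_imp_convergent_subsequence[OF bs[OF s0p]] by blast
  have c0p: "\<forall>k. (s0 \<circ> r) k > 0" using s0p by simp
  have c0l: "(s0 \<circ> r) \<longlonglongrightarrow> 0" using LIMSEQ_subseq_LIMSEQ[OF s0l r] .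
  have c0f: "(\<lambda>k. f ((s0 \<circ> r) k)) \<longlonglongrightarrow> l" using lr by (simp add: o_def)
  show ?thesis
  proof (rule exI[of _ l], rule ccontr)
    assume "\<not> (f \<longlongrightarrow> l) (at_right 0)"
    then obtain e where e: "e > 0" "\<not> eventually (\<lambda>t. dist (f t) l < e) (at_right 0)"
      unfolding tendsto_iff by blast
    then have "\<forall>b>0. \<exists>y>0. y < b \<and> e \<le> dist (f y) l"
      unfolding eventually_at_right_field by (auto simp: not_less) (metis not_le)
    then have "\<forall>k. \<exists>y>0. y < inverse (real (Suc k)) \<and> e \<le> dist (f y) l" by simp
    then obtain s1 where s1: "\<And>k. s1 k > 0" "\<And>k. s1 k < inverse (real (Suc k))"
      "\<And>k. e \<le> dist (f (s1 k)) l"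
      by metis
    have s1l: "s1 \<longlonglongrightarrow> 0"
    proof (rule Lim_null_comparison[OF _ LIMSEQ_inverse_real_of_nat])
      show "\<forall>\<^sub>F k in sequentially. norm (s1 k) \<le> inverse (real (Suc k))"
        using s1 by (simp add: less_imp_le)
    qed
    obtain l1 r1 where r1: "strict_mono r1" and lr1: "((\<lambda>k. f (s1 k)) \<circ> r1) \<longlonglongrightarrow> l1"
      using bounded_imp_convergent_subsequence[OF bs] s1(1) by blast
    have c1p: "\<forall>k. (s1 \<circ> r1) k > 0" using s1 by simp
    have c1l: "(s1 \<circ> r1) \<longlonglongrightarrow> 0" using LIMSEQ_subseq_LIMSEQ[OF s1l r1] .
    have c1f: "(\<lambda>k. f ((s1 \<circ> r1) k)) \<longlonglongrightarrow> l1" using lr1 by (simp add: o_def)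
    have "l = l1" using uniq[OF c0p c0l c0f c1p c1l c1f] .
    moreover have "e \<le> dist l1 l"
    proof (rule LIMSEQ_le_const)
      show "(\<lambda>k. dist (f ((s1 \<circ> r1) k)) l) \<longlonglongrightarrow> dist l1 l"
        by (intro tendsto_intros c1f)
      show "\<exists>N. \<forall>n\<ge>N. e \<le> dist (f ((s1 \<circ> r1) n)) l" using s1(3) by simp
    qed
    ultimately show False using e by simp
  qed
qed

lemma tendsto_transpose:
  "(f \<longlongrightarrow> (A::real^'n::finite^'m::finite)) F \<Longrightarrow> ((\<lambda>x. transpose (f x)) \<longlongrightarrow> transpose A) F"
  unfolding transpose_def by (intro tendsto_intros)

lemma tendsto_mm:
  "(f \<longlongrightarrow> (A::real^'n::finite^'n)) F \<Longrightarrow> (g \<longlongrightarrow> B) F \<Longrightarrow> ((\<lambda>x. f x ** g x) \<longlongrightarrow> A ** B) F"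
  unfolding matrix_matrix_mult_def by (intro tendsto_intros)

lemma tendsto_mv:
  "(f \<longlongrightarrow> (A::real^'n::finite^'n)) F \<Longrightarrow> ((\<lambda>x. f x *v u) \<longlongrightarrow> A *v u) F"
  unfolding matrix_vector_mult_def by (intro tendsto_intros)

lemma W_subspace: "subspace {u::real^'n::finite. x *v u = 0 \<and> v *v u = 0}"
  unfolding subspace_def by (auto simp: matrix_vector_right_distrib matrix_vector_mult_scaleR)

definition qq :: "real^'n::finite^'n \<Rightarrow> real^'n^'n \<Rightarrow> real \<Rightarrow> real^'n^'n" where
  "qq Z H t = (proj_psd (Z + t *\<^sub>R H) - proj_psd Z) /\<^sub>R t"

lemma qq_props:
  fixes Z H :: "real^'n::finite^'n"
  assumes sZ: "sym_mat Z" and sH: "sym_mat H" and t: "t > 0"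
  defines "x \<equiv> proj_psd Z" and "v \<equiv> Z - proj_psd Z" and "q \<equiv> qq Z H t"
  shows "sym_mat q" "norm q \<le> norm H"
    "q ** v + x ** (H - q) + t *\<^sub>R (q ** (H - q)) = 0"
    "\<forall>u. x *v u = 0 \<longrightarrow> 0 \<le> u \<bullet> (q *v u)"
    "\<forall>e. psd e \<longrightarrow> v \<bullet> e = 0 \<longrightarrow> (H - q) \<bullet> e \<le> 0"
    "\<forall>w. x *v w = 0 \<longrightarrow> v *v w = 0 \<longrightarrow> (q *v w) \<bullet> ((H - q) *v w) = 0"
proof -
  define Y where "Y = Z + t *\<^sub>R H"
  have sY: "sym_mat Y" using sym_add[OF sZ sym_scale[OF sH]] Y_def by simp
  define xt where "xt = proj_psd Y"
  define vt where "vt = Y - proj_psd Y"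
  have P0: "psd x" "psd (- v)" "x ** v = 0" using proj_sym_props[OF sZ] x_def v_def by auto
  have Pt: "psd xt" "psd (- vt)" "xt ** vt = 0" using proj_sym_props[OF sY] xt_def vt_def by auto
  have xt_eq: "xt = x + t *\<^sub>R q" using t by (simp add: q_def qq_def xt_def Y_def x_def)
  have v_eq: "v = Z - x" by (simp add: v_def x_def)
  have "vt = Y - xt" by (simp add: vt_def xt_def)
  also have "\<dots> = (Z + t *\<^sub>R H) - (x + t *\<^sub>R q)" by (simp only: Y_def xt_eq)
  also have "\<dots> = (Z - x) + t *\<^sub>R (H - q)" by (simp add: scaleR_diff_right)
  finally have vt_eq: "vt = v + t *\<^sub>R (H - q)" using v_eq by simp
  have sx: "sym_mat x" using psd_sym[OF P0(1)] .
  have sxt: "sym_mat xt" using psd_sym[OF Pt(1)] .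
  have qe: "q = (1/t) *\<^sub>R (xt - x)" using xt_eq t by simp
  show sq: "sym_mat q" using qe sym_scale[OF sym_diff[OF sxt sx]] by simp
  have "norm (xt - x) \<le> norm (Y - Z)" using proj_psd_nonexp xt_def x_def by simp
  also have "\<dots> = t * norm H" using t by (simp add: Y_def)
  finally have nq: "norm (xt - x) \<le> t * norm H" .
  have "norm q = norm (xt - x) / t" using t by (subst qe) simp
  then show "norm q \<le> norm H" using nq t by (simp add: divide_le_eq mult.commute)
  define r where "r = H - q"
  have "xt ** vt = x ** v + t *\<^sub>R (q ** v + x ** r + t *\<^sub>R (q ** r))"
    by (simp add: xt_eq vt_eq r_def[symmetric] matrix_add_ldistrib mm_add_r scalar_matrix_assoc[symmetric]
        matrix_scalar_ac scaleR_add_right algebra_simps)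
  then have "t *\<^sub>R (q ** v + x ** r + t *\<^sub>R (q ** r)) = 0" using Pt(3) P0(3) by simp
  then show E: "q ** v + x ** (H - q) + t *\<^sub>R (q ** (H - q)) = 0" using t r_def by simp
  show "\<forall>u. x *v u = 0 \<longrightarrow> 0 \<le> u \<bullet> (q *v u)"
  proof (intro allI impI)
    fix u assume u: "x *v u = 0"
    have "0 \<le> u \<bullet> (xt *v u)" using psd_quad[OF Pt(1)] .
    also have "u \<bullet> (xt *v u) = t * (u \<bullet> (q *v u))"
      using u by (simp add: xt_eq matrix_vector_mult_add_rdistrib scaleR_matrix_vector_assoc[symmetric])
    finally show "0 \<le> u \<bullet> (q *v u)" using t by (simp add: zero_le_mult_iff)
  qed
  show "\<forall>e. psd e \<longrightarrow> v \<bullet> e = 0 \<longrightarrow> (H - q) \<bullet> e \<le> 0"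
  proof (intro allI impI)
    fix e assume e: "psd e" "v \<bullet> e = 0"
    have "0 \<le> e \<bullet> (- vt)" using psd_inner_nonneg[OF e(1) Pt(2)] .
    then have "vt \<bullet> e \<le> 0" by (simp add: inner_commute)
    also have "vt \<bullet> e = t * ((H - q) \<bullet> e)" using e(2) by (simp add: vt_eq inner_add_left)
    finally show "(H - q) \<bullet> e \<le> 0" using t by (simp add: mult_le_0_iff)
  qed
  show "\<forall>w. x *v w = 0 \<longrightarrow> v *v w = 0 \<longrightarrow> (q *v w) \<bullet> ((H - q) *v w) = 0"
  proof (intro allI impI)
    fix w assume w: "x *v w = 0" "v *v w = 0"
    have "w \<bullet> ((q ** v + x ** r + t *\<^sub>R (q ** r)) *v w) = 0" using E r_def by simp
    moreover have "w \<bullet> ((q ** v) *v w) = 0" using w by (simp add: matrix_vector_mul_assoc[symmetric])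
    moreover have "w \<bullet> ((x ** r) *v w) = 0"
      using w sym_inner_mv[OF sx, of w "r *v w"] by (simp add: matrix_vector_mul_assoc[symmetric])
    ultimately have "w \<bullet> ((t *\<^sub>R (q ** r)) *v w) = 0"
      by (simp add: matrix_vector_mult_add_rdistrib inner_add_right)
    then have "t * (w \<bullet> (q *v (r *v w))) = 0"
      by (simp add: scaleR_matrix_vector_assoc[symmetric] matrix_vector_mul_assoc[symmetric])
    then have "w \<bullet> (q *v (r *v w)) = 0" using t by simp
    then show "(q *v w) \<bullet> ((H - q) *v w) = 0" using sym_inner_mv[OF sq, of w "r *v w"] r_def by simp
  qed
qed

lemma qq_cluster:
  fixes Z H :: "real^'n::finite^'n"
  assumes sZ: "sym_mat Z" and sH: "sym_mat H"
    and sp: "\<forall>k. s k > 0" and sl: "s \<longlonglongrightarrow> 0" and qp: "(\<lambda>k. qq Z H (s k)) \<longlonglongrightarrow> p"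
  shows "cl_cond (proj_psd Z) (Z - proj_psd Z) H p"
proof -
  define x where "x = proj_psd Z"
  define v where "v = Z - proj_psd Z"
  define q where "q = (\<lambda>k. qq Z H (s k))"
  have qk: "\<And>k. q k = qq Z H (s k)" by (simp add: q_def)
  have qp': "q \<longlonglongrightarrow> p" using qp q_def by simp
  note props = qq_props[OF sZ sH sp[rule_format], folded v_def, folded x_def, folded qk]
  have "(\<lambda>k. transpose (q k)) \<longlonglongrightarrow> transpose p" by (rule tendsto_transpose[OF qp'])
  moreover have "(\<lambda>k. transpose (q k)) = q" using props(1) by (simp add: sym_mat_def)
  ultimately have "transpose p = p" using qp' LIMSEQ_unique by metis
  then have S: "sym_mat p" by (simp add: sym_mat_def)
  have L1: "p ** v + x ** (H - p) = 0"
  proof -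
    have a: "(\<lambda>k. q k ** v + x ** (H - q k)) \<longlonglongrightarrow> p ** v + x ** (H - p)"
      by (intro tendsto_add tendsto_mm tendsto_diff tendsto_const qp')
    have b: "(\<lambda>k. - (s k *\<^sub>R (q k ** (H - q k)))) \<longlonglongrightarrow> - (0 *\<^sub>R (p ** (H - p)))"
      by (intro tendsto_minus tendsto_scaleR tendsto_mm tendsto_diff tendsto_const qp' sl)
    have c: "(\<lambda>k. q k ** v + x ** (H - q k)) = (\<lambda>k. - (s k *\<^sub>R (q k ** (H - q k))))"
      using props(3) by (auto simp: eq_neg_iff_add_eq_0 add.assoc)
    show ?thesis using a b c LIMSEQ_unique by fastforce
  qed
  have L3: "\<forall>u. x *v u = 0 \<longrightarrow> 0 \<le> u \<bullet> (p *v u)"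
  proof (intro allI impI)
    fix u assume u: "x *v u = 0"
    show "0 \<le> u \<bullet> (p *v u)"
    proof (rule LIMSEQ_le_const)
      show "(\<lambda>k. u \<bullet> (q k *v u)) \<longlonglongrightarrow> u \<bullet> (p *v u)"
        by (intro tendsto_inner tendsto_const tendsto_mv qp')
      show "\<exists>N. \<forall>n\<ge>N. 0 \<le> u \<bullet> (q n *v u)" using props(4) u by blast
    qed
  qed
  have L4: "\<forall>e. psd e \<longrightarrow> v \<bullet> e = 0 \<longrightarrow> (H - p) \<bullet> e \<le> 0"
  proof (intro allI impI)
    fix e assume e: "psd e" "v \<bullet> e = 0"
    show "(H - p) \<bullet> e \<le> 0"
    proof (rule LIMSEQ_le_const2)
      show "(\<lambda>k. (H - q k) \<bullet> e) \<longlonglongrightarrow> (H - p) \<bullet> e"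
        by (intro tendsto_inner tendsto_const tendsto_diff qp')
      show "\<exists>N. \<forall>n\<ge>N. (H - q n) \<bullet> e \<le> 0" using props(5) e by blast
    qed
  qed
  have L5: "\<forall>w. x *v w = 0 \<longrightarrow> v *v w = 0 \<longrightarrow> (p *v w) \<bullet> ((H - p) *v w) = 0"
  proof (intro allI impI)
    fix w assume w: "x *v w = 0" "v *v w = 0"
    have a: "(\<lambda>k. (q k *v w) \<bullet> ((H - q k) *v w)) \<longlonglongrightarrow> (p *v w) \<bullet> ((H - p) *v w)"
      by (intro tendsto_inner tendsto_mv tendsto_diff tendsto_const qp')
    have "(\<lambda>k. (q k *v w) \<bullet> ((H - q k) *v w)) = (\<lambda>k. 0)" using props(6) w by auto
    then show "(p *v w) \<bullet> ((H - p) *v w) = 0" using a LIMSEQ_unique tendsto_const by metis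
  qed
  show ?thesis unfolding cl_cond_def using S L1 L3 L4 L5 x_def v_def by simp
qed

lemma qq_limit:
  fixes Z H :: "real^'n::finite^'n"
  assumes sZ: "sym_mat Z" and sH: "sym_mat H"
  shows "\<exists>L. (qq Z H \<longlongrightarrow> L) (at_right 0)"
proof -
  define x where "x = proj_psd Z"
  define v where "v = Z - proj_psd Z"
  have P0: "psd x" "psd (- v)" "x ** v = 0" "v ** x = 0" using proj_sym_props[OF sZ] x_def v_def by auto
  obtain P :: "real^'n^'n" where P: "sym_mat P" "\<forall>z. P *v z \<in> {u. x *v u = 0 \<and> v *v u = 0}"
    "\<forall>w\<in>{u. x *v u = 0 \<and> v *v u = 0}. P *v w = w"
    using proj_matrix_exists[OF W_subspace] by blast
  interpret pset x v P
    using P0 P by unfold_locales auto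
  show ?thesis
  proof (rule unique_cluster_tendsto)
    show "\<And>t. t > 0 \<Longrightarrow> norm (qq Z H t) \<le> norm H" using qq_props[OF sZ sH] by blast
    fix s s' p p'
    assume "\<forall>k. s k > 0" "s \<longlonglongrightarrow> 0" "(\<lambda>k. qq Z H (s k)) \<longlonglongrightarrow> p"
      "\<forall>k. s' k > 0" "s' \<longlonglongrightarrow> 0" "(\<lambda>k. qq Z H (s' k)) \<longlonglongrightarrow> p'"
    then have "cl_cond x v H p" "cl_cond x v H p'" using qq_cluster[OF sZ sH] x_def v_def by blast+
    then show "p = p'" using cl_unique[OF sH] by blast
  qed
qed

lemma firm_iter:
  fixes T :: "'a::euclidean_space \<Rightarrow> 'a"
  assumes cS: "closed S" and TS: "\<And>X. X \<in> S \<Longrightarrow> T X \<in> S" and z: "0 \<in> S" and T0: "T 0 = 0"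
    and firm: "\<And>H G. H \<in> S \<Longrightarrow> G \<in> S \<Longrightarrow>
        (norm (T H - T G))\<^sup>2 + (norm ((H - T H) - (G - T G)))\<^sup>2 \<le> (norm (H - G))\<^sup>2"
    and H0: "H0 \<in> S"
  shows "\<exists>Hs. ((\<lambda>k. (T ^^ k) H0) \<longlonglongrightarrow> Hs) \<and> T Hs = Hs"
proof -
  define h where "h k = (T ^^ k) H0" for k
  have hS: "h k \<in> S" for k by (induction k) (simp_all add: h_def H0 TS)
  have hSuc: "h (Suc k) = T (h k)" for k by (simp add: h_def)
  have lip: "norm (T a - T b) \<le> norm (a - b)" if "a \<in> S" "b \<in> S" for a b
  proof -
    have "(norm (T a - T b))\<^sup>2 \<le> (norm (a - b))\<^sup>2" using firm[OF that]
      by (smt (verit) zero_le_power2)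
    then show ?thesis by (rule power2_le_imp_le) simp
  qed
  have dec: "(norm (h (Suc k)))\<^sup>2 + (norm (h k - h (Suc k)))\<^sup>2 \<le> (norm (h k))\<^sup>2" for k
    using firm[OF hS z, of k] T0 hSuc by simp
  have bnd: "norm (h k) \<le> norm H0" for k
  proof (induction k)
    case 0 then show ?case by (simp add: h_def)
  next
    case (Suc k)
    have "(norm (h (Suc k)))\<^sup>2 \<le> (norm (h k))\<^sup>2" using dec[of k] by (smt (verit) zero_le_power2)
    then have "norm (h (Suc k)) \<le> norm (h k)" by (rule power2_le_imp_le) simp
    then show ?case using Suc by simp
  qed
  have psum: "(\<Sum>k<N. (norm (h k - h (Suc k)))\<^sup>2) \<le> (norm H0)\<^sup>2 - (norm (h N))\<^sup>2" for N
  proof (induction N)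
    case 0 then show ?case by (simp add: h_def)
  next
    case (Suc N) then show ?case using dec[of N] by simp
  qed
  have "summable (\<lambda>k. (norm (h k - h (Suc k)))\<^sup>2)"
  proof (rule summableI_nonneg_bounded)
    show "\<And>n. 0 \<le> (norm (h n - h (Suc n)))\<^sup>2" by simp
    show "(\<Sum>i<n. (norm (h i - h (Suc i)))\<^sup>2) \<le> (norm H0)\<^sup>2" for n
      using psum[of n] by (smt (verit) zero_le_power2)
  qed
  then have "(\<lambda>k. (norm (h k - h (Suc k)))\<^sup>2) \<longlonglongrightarrow> 0" by (rule summable_LIMSEQ_zero)
  then have "(\<lambda>k. sqrt ((norm (h k - h (Suc k)))\<^sup>2)) \<longlonglongrightarrow> sqrt 0" by (rule tendsto_real_sqrt)
  then have "(\<lambda>k. norm (h k - h (Suc k))) \<longlonglongrightarrow> 0" by simp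
  then have diff0: "(\<lambda>k. h k - h (Suc k)) \<longlonglongrightarrow> 0" by (simp add: tendsto_norm_zero_iff)
  have "bounded (range h)" unfolding bounded_iff using bnd by blast
  then obtain Hs r where r: "strict_mono r" and hr: "(h \<circ> r) \<longlonglongrightarrow> Hs"
    using bounded_imp_convergent_subsequence by blast
  have HsS: "Hs \<in> S" using closed_sequentially[OF cS _ hr] hS by simp
  have d1: "(\<lambda>k. h (r k) - h (Suc (r k))) \<longlonglongrightarrow> 0"
    using LIMSEQ_subseq_LIMSEQ[OF diff0 r] by (simp add: o_def)
  have hr': "(\<lambda>k. h (r k)) \<longlonglongrightarrow> Hs" using hr by (simp add: o_def)
  have a1: "(\<lambda>k. h (Suc (r k))) \<longlonglongrightarrow> Hs - 0"
  proof -
    have "(\<lambda>k. h (r k) - (h (r k) - h (Suc (r k)))) \<longlonglongrightarrow> Hs - 0"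
      by (intro tendsto_diff hr' d1)
    then show ?thesis by simp
  qed
  have a2: "(\<lambda>k. h (Suc (r k))) \<longlonglongrightarrow> T Hs"
  proof -
    have "(\<lambda>k. h (r k) - Hs) \<longlonglongrightarrow> 0" using hr' by (rule LIM_zero)
    then have n0: "(\<lambda>k. norm (h (r k) - Hs)) \<longlonglongrightarrow> 0" by (simp add: tendsto_norm_zero_iff)
    have "(\<lambda>k. T (h (r k)) - T Hs) \<longlonglongrightarrow> 0"
    proof (rule Lim_null_comparison[OF _ n0])
      show "\<forall>\<^sub>F k in sequentially. norm (T (h (r k)) - T Hs) \<le> norm (h (r k) - Hs)"
        using lip[OF hS HsS] by simp
    qed
    then have "(\<lambda>k. T (h (r k))) \<longlonglongrightarrow> T Hs" by (rule LIM_zero_cancel)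
    then show ?thesis by (simp add: hSuc)
  qed
  have fixp: "T Hs = Hs" using LIMSEQ_unique[OF a2 a1] by simp
  have mono: "norm (h (Suc k) - Hs) \<le> norm (h k - Hs)" for k
    using lip[OF hS HsS, of k] fixp hSuc by simp
  then have decs: "decseq (\<lambda>k. norm (h k - Hs))" by (rule decseq_SucI)
  have "h \<longlonglongrightarrow> Hs"
    unfolding LIMSEQ_iff
  proof (intro allI impI)
    fix e :: real assume e: "e > 0"
    have "(\<lambda>k. h (r k) - Hs) \<longlonglongrightarrow> 0" using hr' by (rule LIM_zero)
    then obtain no where "\<forall>n\<ge>no. norm ((h (r n) - Hs) - 0) < e"
      using e unfolding LIMSEQ_iff by blast
    then have j: "norm (h (r no) - Hs) < e" by simp
    show "\<exists>no. \<forall>n\<ge>no. norm (h n - Hs) < e"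
    proof (intro exI allI impI)
      fix n assume "r no \<le> n"
      then have "norm (h n - Hs) \<le> norm (h (r no) - Hs)" using decseqD[OF decs, of "r no" n] by simp
      then show "norm (h n - Hs) < e" using j by simp
    qed
  qed
  then show ?thesis using fixp by (intro exI[of _ Hs]) (simp add: h_def[abs_def])
qed

lemma dd_def_eq: "dir_deriv proj_psd Z H = Lim (at_right 0) (qq Z H)"
  by (simp add: dir_deriv_def qq_def[abs_def])

lemma dd_tendsto:
  fixes Z H :: "real^'n::finite^'n"
  assumes "sym_mat Z" "sym_mat H"
  shows "(qq Z H \<longlongrightarrow> dir_deriv proj_psd Z H) (at_right 0)"
proof -
  obtain L where L: "(qq Z H \<longlongrightarrow> L) (at_right 0)" using qq_limit[OF assms] by blast
  have "Lim (at_right 0) (qq Z H) = L" using tendsto_Lim[OF _ L] by simp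
  then show ?thesis using L unfolding dd_def_eq by simp
qed

lemma dd_sym:
  fixes Z H :: "real^'n::finite^'n"
  assumes sZ: "sym_mat Z" and sH: "sym_mat H"
  shows "sym_mat (dir_deriv proj_psd Z H)"
proof -
  let ?D = "dir_deriv proj_psd Z H"
  have 1: "((\<lambda>t. transpose (qq Z H t)) \<longlongrightarrow> transpose ?D) (at_right 0)"
    by (rule tendsto_transpose[OF dd_tendsto[OF sZ sH]])
  have ev: "eventually (\<lambda>t. transpose (qq Z H t) = qq Z H t) (at_right 0)"
    using eventually_at_right_less[of 0] by (rule eventually_mono) (use qq_props(1)[OF sZ sH] in \<open>simp add: sym_T\<close>)
  have 2: "((\<lambda>t. transpose (qq Z H t)) \<longlongrightarrow> ?D) (at_right 0)"
    using tendsto_cong[OF ev] dd_tendsto[OF sZ sH] by simp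
  have "transpose ?D = ?D" using tendsto_unique[OF trivial_limit_at_right_real 1 2] .
  then show ?thesis by (simp add: sym_mat_def)
qed

lemma dd_nsd:
  fixes Z H :: "real^'n::finite^'n"
  assumes sZ: "sym_mat Z" and sH: "sym_mat H"
  shows "dir_deriv proj_nsd Z H = H - dir_deriv proj_psd Z H"
proof -
  have ev: "eventually (\<lambda>t. (proj_nsd (Z + t *\<^sub>R H) - proj_nsd Z) /\<^sub>R t = H - qq Z H t) (at_right 0)"
    using eventually_at_right_less[of 0]
  proof (rule eventually_mono)
    fix t :: real assume t: "0 < t"
    have sY: "sym_mat (Z + t *\<^sub>R H)" using sym_add[OF sZ sym_scale[OF sH]] .
    have "proj_nsd (Z + t *\<^sub>R H) - proj_nsd Z
        = t *\<^sub>R H - (proj_psd (Z + t *\<^sub>R H) - proj_psd Z)"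
      using proj_nsd_eq[OF sY] proj_nsd_eq[OF sZ] by (simp add: algebra_simps)
    then show "(proj_nsd (Z + t *\<^sub>R H) - proj_nsd Z) /\<^sub>R t = H - qq Z H t"
      using t by (simp add: qq_def scaleR_diff_right)
  qed
  have "((\<lambda>t. H - qq Z H t) \<longlongrightarrow> H - dir_deriv proj_psd Z H) (at_right 0)"
    by (intro tendsto_diff tendsto_const dd_tendsto[OF sZ sH])
  then have "((\<lambda>t. (proj_nsd (Z + t *\<^sub>R H) - proj_nsd Z) /\<^sub>R t) \<longlongrightarrow> H - dir_deriv proj_psd Z H) (at_right 0)"
    using tendsto_cong[OF ev] by simp
  then show ?thesis unfolding dir_deriv_def using tendsto_Lim by force
qed

lemma dd_zero:
  fixes Z :: "real^'n::finite^'n"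
  shows "dir_deriv proj_psd Z 0 = 0"
proof -
  have q0: "qq Z 0 = (\<lambda>t. 0)" by (simp add: qq_def[abs_def])
  show ?thesis unfolding dd_def_eq q0 by (rule tendsto_Lim) simp_all
qed

lemma dd_firm:
  fixes Z H G :: "real^'n::finite^'n"
  assumes sZ: "sym_mat Z" and sH: "sym_mat H" and sG: "sym_mat G"
  shows "(norm (dir_deriv proj_psd Z H - dir_deriv proj_psd Z G))\<^sup>2
     \<le> (dir_deriv proj_psd Z H - dir_deriv proj_psd Z G) \<bullet> (H - G)"
proof (rule tendsto_le[OF trivial_limit_at_right_real])
  show "((\<lambda>t. (qq Z H t - qq Z G t) \<bullet> (H - G)) \<longlongrightarrow>
      (dir_deriv proj_psd Z H - dir_deriv proj_psd Z G) \<bullet> (H - G)) (at_right 0)"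
    by (intro tendsto_inner tendsto_diff tendsto_const dd_tendsto sZ sH sG)
  show "((\<lambda>t. (norm (qq Z H t - qq Z G t))\<^sup>2) \<longlongrightarrow>
      (norm (dir_deriv proj_psd Z H - dir_deriv proj_psd Z G))\<^sup>2) (at_right 0)"
    by (intro tendsto_power tendsto_norm tendsto_diff dd_tendsto sZ sH sG)
  show "\<forall>\<^sub>F t in at_right 0. (norm (qq Z H t - qq Z G t))\<^sup>2 \<le> (qq Z H t - qq Z G t) \<bullet> (H - G)"
    using eventually_at_right_less[of 0]
  proof (rule eventually_mono)
    fix t :: real assume t: "0 < t"
    define a where "a = Z + t *\<^sub>R H"
    define b where "b = Z + t *\<^sub>R G"
    define w where "w = proj_psd a - proj_psd b"
    have qd: "qq Z H t - qq Z G t = w /\<^sub>R t"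
      by (simp add: qq_def w_def a_def b_def scaleR_diff_right)
    have ab: "a - b = t *\<^sub>R (H - G)" by (simp add: a_def b_def scaleR_diff_right)
    have f: "(norm w)\<^sup>2 \<le> t * (w \<bullet> (H - G))" using proj_psd_firm[of a b] ab w_def by simp
    have "norm (qq Z H t - qq Z G t) = norm w / t" using t by (simp add: qd divide_inverse mult.commute)
    then have "(norm (qq Z H t - qq Z G t))\<^sup>2 = (norm w)\<^sup>2 / (t * t)"
      by (simp add: power_divide power2_eq_square)
    also have "\<dots> \<le> t * (w \<bullet> (H - G)) / (t * t)" by (rule divide_right_mono) (use f t in auto)
    also have "\<dots> = (w \<bullet> (H - G)) / t" using t by simp
    also have "\<dots> = (qq Z H t - qq Z G t) \<bullet> (H - G)" using t by (simp add: qd divide_inverse mult.commute)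
    finally show "(norm (qq Z H t - qq Z G t))\<^sup>2 \<le> (qq Z H t - qq Z G t) \<bullet> (H - G)" .
  qed
qed

lemma aop_diff: "Aop A (X - Y) = Aop A X - Aop A Y"
  by (simp add: Aop_def vec_eq_iff inner_diff_right)

lemma aadj_diff: "Aadj A (y - z) = Aadj A y - Aadj A z"
  by (simp add: Aadj_def scaleR_diff_left sum_subtractf)

lemma aadj_inner: "Aadj A y \<bullet> X = y \<bullet> Aop A X"
proof -
  have "Aadj A y \<bullet> X = (\<Sum>i\<in>UNIV. y$i * (A i \<bullet> X))" by (simp add: Aadj_def inner_sum_left)
  also have "\<dots> = y \<bullet> Aop A X" by (simp add: Aop_def inner_vec_def)
  finally show ?thesis .
qed

lemma aop_aadj: "Aop A (Aadj A y) = (\<chi> i j. A i \<bullet> A j) *v y"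
  by (simp add: Aop_def Aadj_def vec_eq_iff inner_sum_right matrix_vector_mult_def mult.commute)

lemma aadj_sym:
  assumes "\<And>i. A i \<in> Sn"
  shows "Aadj A y \<in> Sn"
proof -
  have "sym_mat (A i)" for i using assms by (simp add: Sn_def)
  then show ?thesis
    unfolding Sn_def by (auto intro!: sym_matI sum.cong simp: Aadj_def sum_component sym_entry)
qed

lemma gram_inv:
  fixes A :: "'m::finite \<Rightarrow> real^'n::finite^'n"
  assumes A1: "Aop A ` Sn = UNIV"
  shows "(\<chi> i j. A i \<bullet> A j) ** matrix_inv (\<chi> i j. A i \<bullet> A j) = mat 1"
proof -
  define G :: "real^'m^'m" where "G = (\<chi> i j. A i \<bullet> A j)"
  have ker: "y = 0" if "G *v y = 0" for y
  proof -
    have "Aadj A y \<bullet> Aadj A y = y \<bullet> (G *v y)" by (simp add: aadj_inner aop_aadj G_def)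
    then have a0: "Aadj A y = 0" using that by simp
    obtain X where "Aop A X = y" using A1 by (metis UNIV_I imageE)
    then have "y \<bullet> y = Aadj A y \<bullet> X" by (simp add: aadj_inner)
    then show "y = 0" using a0 by simp
  qed
  have "inj ((*v) G)"
  proof (rule injI)
    fix a b assume "G *v a = G *v b"
    then have "G *v (a - b) = 0" by (simp add: matrix_vector_mult_diff_distrib)
    then show "a = b" using ker[of "a - b"] by simp
  qed
  then have "invertible G"
    using matrix_left_invertible_injective invertible_left_inverse by blast
  then have "\<exists>A'. G ** A' = mat 1 \<and> A' ** G = mat 1" by (simp add: invertible_def)
  then have "G ** matrix_inv G = mat 1 \<and> matrix_inv G ** G = mat 1"
    unfolding matrix_inv_def by (rule someI_ex)
  then show ?thesis using G_def by simp
qed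

lemma aop_pop:
  assumes A1: "Aop A ` Sn = UNIV"
  shows "Aop A (Pop A X) = Aop A X"
  using gram_inv[OF A1] by (simp add: Pop_def aop_aadj matrix_vector_mul_assoc)

lemma pop_orth:
  assumes A1: "Aop A ` Sn = UNIV"
  shows "Pop A U \<bullet> (W - Pop A W) = 0"
  by (simp add: Pop_def aadj_inner aop_diff aop_pop[OF A1, unfolded Pop_def])

lemma pop_diff: "Pop A (X - Y) = Pop A X - Pop A Y"
  by (simp add: Pop_def aop_diff matrix_vector_mult_diff_distrib aadj_diff)

lemma pop_zero: "Pop A 0 = 0"
  using pop_diff[of A 0 0] by simp

lemma sym_in_Sn: "X \<in> Sn \<longleftrightarrow> sym_mat X" by (simp add: Sn_def)

lemma closed_Sn: "closed (Sn :: (real^'n::finite^'n) set)"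
proof -
  have "(Sn :: (real^'n^'n) set) = (\<Inter>i. \<Inter>j. {A. A$i$j = A$j$i})"
    by (auto simp: Sn_def sym_mat_def vec_eq_iff transpose_def)
  also have "closed \<dots>"
    by (intro closed_INT ballI closed_Collect_eq continuous_intros)
  finally show ?thesis .
qed

theorem lemma4p2:
  fixes C :: "real^'n::finite^'n" and A :: "'m::finite \<Rightarrow> real^'n^'n"
    and b :: "real^'m" and \<sigma> :: real and Zbar :: "real^'n^'n"
  assumes C_sym: "C \<in> Sn" and A_sym: "\<And>i. A i \<in> Sn"
    and A1: "Aop A ` Sn = UNIV"
    and A2: "\<exists>Xsc ysc Ssc. is_KKT C A b Xsc ysc Ssc \<and> rank Xsc + rank Ssc = CARD('n)"
    and sigma_pos: "\<sigma> > 0"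
    and Zbar: "Zbar \<in> Z_star \<sigma> C A b"
  defines "T \<equiv> (\<lambda>H. H + delta' A Zbar H)"
  shows "(\<forall>H\<in>Sn. \<forall>G\<in>Sn.
            (norm (T H - T G))\<^sup>2 + (norm ((H - T H) - (G - T G)))\<^sup>2 \<le> (norm (H - G))\<^sup>2)
       \<and> (\<forall>H0\<in>Sn. \<exists>Hs. ((\<lambda>k. (T ^^ k) H0) \<longlonglongrightarrow> Hs) \<and> T Hs = Hs)"
proof -
  obtain X S where Z: "Zbar = X - \<sigma> *\<^sub>R S" "X \<in> X_star C A b" "S \<in> S_star C A b"
    using Zbar unfolding Z_star_def by blast
  have pX: "psd X" using Z(2) by (auto simp: X_star_def is_KKT_def)
  have pS: "psd S" using Z(3) by (auto simp: S_star_def is_KKT_def)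
  have sZ: "sym_mat Zbar" using Z(1) sym_diff[OF psd_sym[OF pX] sym_scale[OF psd_sym[OF pS]]] by simp
  define D where "D H = dir_deriv proj_psd Zbar H" for H
  have popS: "sym_mat (Pop A M)" for M
    using aadj_sym[OF A_sym] by (simp add: Pop_def Sn_def)
  have TH: "T H = Pop A H + D H - Pop A (D H) - Pop A (D H)" if sH: "sym_mat H" for H
  proof -
    have "T H = H + delta' A Zbar H" by (simp add: T_def)
    also have "\<dots> = H - Pop A (D H) - Pperp A (H - D H)"
      using dd_nsd[OF sZ sH] by (simp add: delta'_def D_def)
    also have "\<dots> = Pop A H + D H - Pop A (D H) - Pop A (D H)"
      by (simp add: Pperp_def pop_diff algebra_simps)
    finally show ?thesis .
  qed
  have firmT: "(norm (T H - T G))\<^sup>2 + (norm ((H - T H) - (G - T G)))\<^sup>2 \<le> (norm (H - G))\<^sup>2"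
    if HS: "H \<in> Sn" and GS: "G \<in> Sn" for H G
  proof -
    have sH: "sym_mat H" and sG: "sym_mat G" using HS GS by (auto simp: Sn_def)
    define h where "h = H - G"
    define d where "d = D H - D G"
    define h1 where "h1 = Pop A h"
    define h2 where "h2 = h - h1"
    define d1 where "d1 = Pop A d"
    define d2 where "d2 = d - d1"
    have a: "T H - T G = h1 - d1 + d2"
      by (simp add: TH[OF sH] TH[OF sG] h1_def d1_def d2_def h_def d_def pop_diff algebra_simps)
    have b: "(H - T H) - (G - T G) = h2 + d1 - d2"
    proof -
      have "(H - T H) - (G - T G) = h - (T H - T G)" by (simp add: h_def algebra_simps)
      then show ?thesis using a by (simp add: h2_def algebra_simps)
    qed
    have o1: "h1 \<bullet> d2 = 0" using pop_orth[OF A1] h1_def d2_def d1_def by simp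
    have o2: "d1 \<bullet> h2 = 0" using pop_orth[OF A1] d1_def h2_def h1_def by simp
    have o3: "d1 \<bullet> d2 = 0" using pop_orth[OF A1] d1_def d2_def by simp
    have o4: "h1 \<bullet> h2 = 0" using pop_orth[OF A1] h1_def h2_def by simp
    have hh: "h = h1 + h2" by (simp add: h2_def)
    have dd: "d = d1 + d2" by (simp add: d2_def)
    have F: "(norm d)\<^sup>2 \<le> d \<bullet> h" using dd_firm[OF sZ sH sG] by (simp add: d_def h_def D_def)
    have F': "d1 \<bullet> d1 + d2 \<bullet> d2 + 2 * (d1 \<bullet> d2) \<le> d1 \<bullet> h1 + d1 \<bullet> h2 + d2 \<bullet> h1 + d2 \<bullet> h2"
      using F unfolding hh dd power2_norm_eq_inner
      by (simp add: inner_add_left inner_add_right inner_commute algebra_simps)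
    have N1: "(norm (h1 - d1 + d2))\<^sup>2 = h1 \<bullet> h1 + d1 \<bullet> d1 + d2 \<bullet> d2 - 2 * (h1 \<bullet> d1) + 2 * (h1 \<bullet> d2) - 2 * (d1 \<bullet> d2)"
      unfolding power2_norm_eq_inner
      by (simp add: inner_add_left inner_add_right inner_diff_left inner_diff_right inner_commute algebra_simps)
    have N2: "(norm (h2 + d1 - d2))\<^sup>2 = h2 \<bullet> h2 + d1 \<bullet> d1 + d2 \<bullet> d2 + 2 * (h2 \<bullet> d1) - 2 * (h2 \<bullet> d2) - 2 * (d1 \<bullet> d2)"
      unfolding power2_norm_eq_inner
      by (simp add: inner_add_left inner_add_right inner_diff_left inner_diff_right inner_commute algebra_simps)
    have N3: "(norm (H - G))\<^sup>2 = h1 \<bullet> h1 + h2 \<bullet> h2 + 2 * (h1 \<bullet> h2)"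
      unfolding h_def[symmetric] hh power2_norm_eq_inner
      by (simp add: inner_add_left inner_add_right inner_commute algebra_simps)
    have c1: "d2 \<bullet> h1 = 0" "h2 \<bullet> d1 = 0" using o1 o2 by (simp_all add: inner_commute)
    have c2: "d1 \<bullet> h1 = h1 \<bullet> d1" "d2 \<bullet> h2 = h2 \<bullet> d2" by (simp_all add: inner_commute)
    show ?thesis unfolding a b N1 N2 N3 using F' o1 o2 o3 o4 c1 c2 by linarith
  qed
  have TS: "T H \<in> Sn" if "H \<in> Sn" for H
  proof -
    have sH: "sym_mat H" using that by (simp add: Sn_def)
    have sD: "sym_mat (D H)" using dd_sym[OF sZ sH] by (simp add: D_def)
    have st: "sym_mat (Pop A H + D H - Pop A (D H) - Pop A (D H))" by (intro sym_diff sym_add popS sD)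
    show ?thesis unfolding Sn_def mem_Collect_eq TH[OF sH] by (rule st)
  qed
  have z: "0 \<in> Sn" by (simp add: Sn_def sym_zero)
  have D0: "D 0 = 0" unfolding D_def by (rule dd_zero)
  have T0: "T 0 = 0" using TH[OF sym_zero] by (simp add: D0 pop_zero)
  show ?thesis
  proof
    show "\<forall>H\<in>Sn. \<forall>G\<in>Sn. (norm (T H - T G))\<^sup>2 + (norm ((H - T H) - (G - T G)))\<^sup>2 \<le> (norm (H - G))\<^sup>2"
      using firmT by blast
    show "\<forall>H0\<in>Sn. \<exists>Hs. ((\<lambda>k. (T ^^ k) H0) \<longlonglongrightarrow> Hs) \<and> T Hs = Hs"
      using firm_iter[OF closed_Sn TS z T0 firmT] by blast
  qed
qed

end
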